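(* Let $A\in\mathbb{C}^{2n\times 2n}$ be a normal perskew-Hermitian matrix all of whose eigenvalues have nonzero real parts. Then there exist a unitary perplectic matrix $U\in\mathbb{C}^{2n\times 2n}$ and a diagonal matrix $D\in\mathbb{C}^{n\times n}$ such that $$A=U\begin{bmatrix} D & 0\\ 0 & -F_nD^HF_n\end{bmatrix}U^H .$$
   Context: For $m\ge1$, $F_m\in\mathbb{R}^{m\times m}$ denotes the flip (exchange) matrix with ones on the antidiagonal and zeros elsewhere. A matrix $A\in\mathbb{C}^{2n\times 2n}$ is per-Hermitian if $(F_{2n}A)^H=F_{2n}A$ and perskew-Hermitian if $(F_{2n}A)^H=-F_{2n}A$. A matrix $Z\in\mathbb{C}^{2n\times 2n}$ is perplectic if $Z^HF_{2n}Z=F_{2n}$; "unitary perplectic" means both unitary and perplectic. *)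

theory Defs
  imports "Jordan_Normal_Form.Schur_Decomposition" "Jordan_Normal_Form.Char_Poly"
begin

definition flip_mat :: "nat \<Rightarrow> complex mat" where
  "flip_mat m = mat m m (\<lambda>(i,j). if i + j + 1 = m then 1 else 0)"

definition perskew_hermitian :: "nat \<Rightarrow> complex mat \<Rightarrow> bool" where
  "perskew_hermitian n A \<longleftrightarrow>
     A \<in> carrier_mat (2*n) (2*n) \<and>
     mat_adjoint (flip_mat (2*n) * A) = - (flip_mat (2*n) * A)"

definition normal_mat :: "complex mat \<Rightarrow> bool" where
  "normal_mat A \<longleftrightarrow> A * mat_adjoint A = mat_adjoint A * A"

definition unitary_mat :: "nat \<Rightarrow> complex mat \<Rightarrow> bool" where
  "unitary_mat m U \<longleftrightarrow> U \<in> carrier_mat m m \<and>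
     U * mat_adjoint U = 1\<^sub>m m \<and> mat_adjoint U * U = 1\<^sub>m m"

definition perplectic :: "nat \<Rightarrow> complex mat \<Rightarrow> bool" where
  "perplectic n Z \<longleftrightarrow> Z \<in> carrier_mat (2*n) (2*n) \<and>
     mat_adjoint Z * flip_mat (2*n) * Z = flip_mat (2*n)"

end

theory Submission
  imports Defs "Jordan_Normal_Form.Spectral_Radius"
begin


lemma adj_alt: "mat_adjoint (A::complex mat) = mat (dim_col A) (dim_row A) (\<lambda>(i,j). cnj (A $$ (j,i)))"
  unfolding mat_adjoint_def by (rule eq_matI, auto simp: mat_of_rows_def)

lemma adj_dims[simp]: "dim_row (mat_adjoint (A::complex mat)) = dim_col A"
  "dim_col (mat_adjoint (A::complex mat)) = dim_row A"
  by (auto simp: adj_alt)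

lemma adj_carrier[simp]: "(A::complex mat) \<in> carrier_mat n m \<Longrightarrow> mat_adjoint A \<in> carrier_mat m n"
  by (auto simp: adj_alt)

lemma adj_index[simp]: "i < dim_col A \<Longrightarrow> j < dim_row A \<Longrightarrow> mat_adjoint (A::complex mat) $$ (i,j) = cnj (A $$ (j,i))"
  by (auto simp: adj_alt)

lemma adj_adj[simp]: "mat_adjoint (mat_adjoint (A::complex mat)) = A"
  by (rule eq_matI, auto)

lemma adj_mult: assumes "(A::complex mat) \<in> carrier_mat n m" "B \<in> carrier_mat m k"
  shows "mat_adjoint (A * B) = mat_adjoint B * mat_adjoint A"
  using assms
  by (intro eq_matI, auto simp: scalar_prod_def cnj_sum intro!: sum.cong)

lemma adj_one[simp]: "mat_adjoint (1\<^sub>m n :: complex mat) = 1\<^sub>m n"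
  by (rule eq_matI, auto)

lemma adj_zero[simp]: "mat_adjoint (0\<^sub>m n m :: complex mat) = 0\<^sub>m m n"
  by (rule eq_matI, auto)

lemma adj_uminus: "mat_adjoint (- (A :: complex mat)) = - mat_adjoint A"
  by (rule eq_matI, auto)

lemma adj_four_block: assumes "(A::complex mat) \<in> carrier_mat n1 m1" "B \<in> carrier_mat n1 m2"
  "C \<in> carrier_mat n2 m1" "D \<in> carrier_mat n2 m2"
  shows "mat_adjoint (four_block_mat A B C D) = four_block_mat (mat_adjoint A) (mat_adjoint C) (mat_adjoint B) (mat_adjoint D)"
  using assms by (intro eq_matI, auto)



lemma adj_mult_index: "i < dim_col W \<Longrightarrow> j < dim_col W \<Longrightarrow>
   (mat_adjoint W * (W::complex mat)) $$ (i,j) = col W j \<bullet>c col W i"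
  by (auto simp: scalar_prod_def intro!: sum.cong)

lemma cscalar_smult: fixes v w :: "complex vec"
  assumes "v \<in> carrier_vec n" "w \<in> carrier_vec n"
  shows "(a \<cdot>\<^sub>v v) \<bullet>c (b \<cdot>\<^sub>v w) = a * cnj b * (v \<bullet>c w)"
  using assms by (simp add: conjugate_smult_vec)

definition nrmlz :: "complex vec \<Rightarrow> complex vec" where
  "nrmlz w = complex_of_real (1 / sqrt (Re (w \<bullet>c w))) \<cdot>\<^sub>v w"

lemma nrmlz_carrier[simp]: "w \<in> carrier_vec n \<Longrightarrow> nrmlz w \<in> carrier_vec n"
  by (simp add: nrmlz_def)

lemma nrmlz_unit: assumes w: "w \<in> carrier_vec n" "w \<noteq> 0\<^sub>v n"
  shows "nrmlz w \<bullet>c nrmlz w = 1"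
proof -
  have "w \<bullet>c w > 0" using w by simp
  then have im: "Im (w \<bullet>c w) = 0" and re: "Re (w \<bullet>c w) > 0" by (auto simp: less_complex_def)
  have eq: "w \<bullet>c w = complex_of_real (Re (w \<bullet>c w))" by (rule complex_eqI) (use im in auto)
  define c where "c = Re (w \<bullet>c w)"
  have c: "c > 0" using re c_def by simp
  have r: "1 / sqrt c * (1 / sqrt c) * c = 1" using c
    by (simp add: field_simps flip: power2_eq_square)
  have "nrmlz w \<bullet>c nrmlz w = complex_of_real (1 / sqrt c) * cnj (complex_of_real (1 / sqrt c)) * (w \<bullet>c w)"
    unfolding nrmlz_def c_def by (rule cscalar_smult[OF w(1) w(1)])
  also have "\<dots> = complex_of_real (1 / sqrt c * (1 / sqrt c) * c)"
    using eq c_def by (simp only: complex_cnj_complex_of_real of_real_mult)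
  finally show ?thesis using r by simp
qed

lemma nrmlz_orth: assumes "v \<in> carrier_vec n" "w \<in> carrier_vec n" "v \<bullet>c w = 0"
  shows "nrmlz v \<bullet>c nrmlz w = 0"
  unfolding nrmlz_def by (subst cscalar_smult[OF assms(1,2)]) (simp add: assms(3))

lemma nrmlz_unit_id: assumes "w \<bullet>c w = 1" shows "nrmlz w = w"
  using assms unfolding nrmlz_def by simp

lemma unitary_first_col: assumes v: "v \<in> carrier_vec n" and v1: "v \<bullet>c v = 1"
  shows "\<exists>W. unitary_mat n W \<and> col W 0 = v"
proof -
  have v0: "v \<noteq> 0\<^sub>v n" using v1 by auto
  then have n: "n > 0" using v by (cases n, auto)
  interpret cof_vec_space n "TYPE(complex)" .
  define b where "b = basis_completion v"
  from basis_completion[OF v v0, folded b_def]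
  have dist_b: "distinct b" 
    and indep: "\<not> lin_dep (set b)" and b: "set b \<subseteq> carrier_vec n" and hdb: "hd b = v" 
    and len_b: "length b = n" by auto
  from hdb len_b n obtain vs where bv: "b = v # vs" by (cases b, auto)
  define ws where "ws = gram_schmidt n b"
  from gram_schmidt_result[OF b dist_b indep refl, folded ws_def]
  have ws: "set ws \<subseteq> carrier_vec n" "corthogonal ws" "length ws = n" 
    by (auto simp: len_b)
  from gram_schmidt_hd[OF v, of vs, folded bv] have hdws: "hd ws = v" unfolding ws_def .
  define us where "us = map nrmlz ws"
  have wsi: "i < n \<Longrightarrow> ws ! i \<in> carrier_vec n" for i using ws by auto
  have wsnz: "i < n \<Longrightarrow> ws ! i \<noteq> 0\<^sub>v n" for i
  proof
    assume i: "i < n" and z: "ws ! i = 0\<^sub>v n"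
    have "ws ! i \<bullet>c ws ! i = 0" using z by simp
    with corthogonalD[OF ws(2), of i i] i ws(3) show False by auto
  qed
  have usi: "i < n \<Longrightarrow> us ! i \<in> carrier_vec n" for i using wsi ws(3) by (simp add: us_def)
  have lus: "length us = n" using ws(3) by (simp add: us_def)
  have orth: "i < n \<Longrightarrow> j < n \<Longrightarrow> us ! j \<bullet>c us ! i = (if i = j then 1 else 0)" for i j
  proof -
    assume i: "i < n" and j: "j < n"
    show ?thesis
    proof (cases "i = j")
      case True thus ?thesis using nrmlz_unit[OF wsi wsnz, of i] i ws(3) by (simp add: us_def)
    next
      case False
      then have "ws ! j \<bullet>c ws ! i = 0" using corthogonalD[OF ws(2), of j i] i j ws(3) by auto
      thus ?thesis using nrmlz_orth[OF wsi wsi, of j i] i j ws(3) False by (simp add: us_def)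
    qed
  qed
  define W where "W = mat_of_cols n us"
  have W: "W \<in> carrier_mat n n" using lus unfolding W_def by auto
  hence Wd: "dim_row W = n" "dim_col W = n" by auto
  have colW: "i < n \<Longrightarrow> col W i = us ! i" for i unfolding W_def using lus usi by simp
  have WW: "mat_adjoint W * W = 1\<^sub>m n"
  proof (rule eq_matI)
    fix i j assume "i < dim_row (1\<^sub>m n)" "j < dim_col (1\<^sub>m n)"
    then show "(mat_adjoint W * W) $$ (i, j) = 1\<^sub>m n $$ (i, j)"
      by (subst adj_mult_index, auto simp: Wd colW orth)
  qed (simp_all add: Wd)
  have WW': "W * mat_adjoint W = 1\<^sub>m n"
    using mat_mult_left_right_inverse[OF adj_carrier[OF W] W WW] .
  have "col W 0 = v" using colW[OF n] hdws n ws(3) nrmlz_unit_id[OF v1]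
    by (cases ws, auto simp: us_def)
  thus ?thesis using W WW WW' unfolding unitary_mat_def by blast
qed



lemma unitary_carrier: "unitary_mat n U \<Longrightarrow> U \<in> carrier_mat n n"
  by (simp add: unitary_mat_def)

lemma mult_cancel_left: assumes "(A::complex mat) \<in> carrier_mat n m" "B \<in> carrier_mat m n" "X \<in> carrier_mat n k"
  "A * B = 1\<^sub>m n" shows "A * (B * X) = X"
proof -
  have "A * (B * X) = (A * B) * X" by (rule assoc_mult_mat[symmetric, of A n m B n X k], insert assms, auto)
  also have "\<dots> = 1\<^sub>m n * X" using assms(4) by simp
  also have "\<dots> = X" using assms(3) by (rule left_mult_one_mat)
  finally show ?thesis .
qed

lemma unitary_mult: assumes U: "unitary_mat n U" and V: "unitary_mat n V"
  shows "unitary_mat n (U * V)"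
proof -
  have Uc: "U \<in> carrier_mat n n" and Vc: "V \<in> carrier_mat n n" using U V by (auto simp: unitary_mat_def)
  have a: "mat_adjoint (U * V) = mat_adjoint V * mat_adjoint U" using adj_mult[OF Uc Vc] .
  have "U * V * (mat_adjoint V * mat_adjoint U) = U * (V * (mat_adjoint V * mat_adjoint U))"
    by (rule assoc_mult_mat[of U n n V n "mat_adjoint V * mat_adjoint U" n], insert Uc Vc, auto)
  also have "\<dots> = 1\<^sub>m n" using U V Uc Vc
    by (subst mult_cancel_left[of V n n], auto simp: unitary_mat_def)
  finally have 1: "U * V * mat_adjoint (U * V) = 1\<^sub>m n" using a by simp
  have "mat_adjoint V * mat_adjoint U * (U * V) = mat_adjoint V * (mat_adjoint U * (U * V))"
    by (rule assoc_mult_mat[of "mat_adjoint V" n n "mat_adjoint U" n "U * V" n], insert Uc Vc, auto)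
  also have "\<dots> = 1\<^sub>m n" using U V Uc Vc
    by (subst mult_cancel_left[of "mat_adjoint U" n n], auto simp: unitary_mat_def)
  finally have 2: "mat_adjoint (U * V) * (U * V) = 1\<^sub>m n" using a by simp
  show ?thesis using 1 2 Uc Vc unfolding unitary_mat_def by auto
qed

lemma unitary_block: assumes U: "unitary_mat m U"
  shows "unitary_mat (Suc m) (four_block_mat (1\<^sub>m 1) (0\<^sub>m 1 m) (0\<^sub>m m 1) U)"
proof -
  have Uc: "U \<in> carrier_mat m m" using U by (simp add: unitary_mat_def)
  have Ua: "mat_adjoint U \<in> carrier_mat m m" using Uc by simp
  have c: "(1\<^sub>m 1 :: complex mat) \<in> carrier_mat 1 1" "(0\<^sub>m 1 m :: complex mat) \<in> carrier_mat 1 m" 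
     "(0\<^sub>m m 1 :: complex mat) \<in> carrier_mat m 1" by auto
  have a: "mat_adjoint (four_block_mat (1\<^sub>m 1) (0\<^sub>m 1 m) (0\<^sub>m m 1) U) = four_block_mat (1\<^sub>m 1) (0\<^sub>m 1 m) (0\<^sub>m m 1) (mat_adjoint U)"
    using adj_four_block[OF c Uc] by simp
  show ?thesis unfolding unitary_mat_def a 
    unfolding mult_four_block_mat[OF c Uc c Ua] mult_four_block_mat[OF c Ua c Uc]
    using U Uc Ua by (auto simp: unitary_mat_def)
qed

lemma eigen_diag: assumes U: "unitary_mat n U" and T: "T \<in> carrier_mat n n"
  and ut: "upper_triangular T" and A: "A = U * T * mat_adjoint U" and i: "i < n"
  shows "eigenvalue A (T $$ (i,i))"
proof -
  have Ac: "A \<in> carrier_mat n n" using A U T by (auto simp: unitary_mat_def)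
  have "similar_mat_wit A T U (mat_adjoint U)"
    by (rule similar_mat_witI[of _ _ n], insert U T A Ac, auto simp: unitary_mat_def)
  hence "similar_mat A T" unfolding similar_mat_def by blast
  hence cp: "char_poly A = (\<Prod> a \<leftarrow> diag_mat T. [:- a, 1:])"
    using char_poly_similar char_poly_upper_triangular[OF T ut] by metis
  have "T $$ (i,i) \<in> set (diag_mat T)" using T i by (auto simp: diag_mat_def)
  hence "poly (char_poly A) (T $$ (i,i)) = 0" unfolding cp
    by (auto simp: poly_prod_list prod_list_zero_iff)
  thus ?thesis using eigenvalue_root_char_poly[OF Ac] by simp
qed

lemma unit_eigenvector: assumes A: "(A::complex mat) \<in> carrier_mat n n" and e: "eigenvalue A e"
  shows "\<exists>v. v \<in> carrier_vec n \<and> v \<bullet>c v = 1 \<and> A *\<^sub>v v = e \<cdot>\<^sub>v v"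
proof -
  obtain v where v: "eigenvector A v e" using e unfolding eigenvalue_def by auto
  hence vc: "v \<in> carrier_vec n" and v0: "v \<noteq> 0\<^sub>v n" and Av: "A *\<^sub>v v = e \<cdot>\<^sub>v v"
    using A by (auto simp: eigenvector_def)
  have "A *\<^sub>v nrmlz v = e \<cdot>\<^sub>v nrmlz v" unfolding nrmlz_def
    using A vc Av by (simp add: mult_mat_vec smult_smult_assoc mult.commute)
  thus ?thesis using nrmlz_unit[OF vc v0] vc by (intro exI[of _ "nrmlz v"], auto)
qed



lemma schur_ordered:
  fixes P :: "complex \<Rightarrow> bool"
  assumes "(A::complex mat) \<in> carrier_mat n n"
  shows "\<exists>U T k. unitary_mat n U \<and> T \<in> carrier_mat n n \<and> upper_triangular T \<and>
     A = U * T * mat_adjoint U \<and> k \<le> n \<and> (\<forall>i<k. P (T$$(i,i))) \<and>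
     (\<forall>i. k \<le> i \<and> i < n \<longrightarrow> \<not> P (T$$(i,i)))"
  using assms
proof (induction n arbitrary: A)
  case 0
  have "A = 1\<^sub>m 0 * A * mat_adjoint (1\<^sub>m 0)" using 0 by (intro eq_matI, auto)
  moreover have "unitary_mat 0 (1\<^sub>m 0)" by (auto simp: unitary_mat_def)
  ultimately show ?case using 0 by (intro exI[of _ "1\<^sub>m 0"] exI[of _ A] exI[of _ 0], auto)
next
  case (Suc m A)
  have Ac: "A \<in> carrier_mat (Suc m) (Suc m)" by fact
  obtain e where e: "eigenvalue A e" and pe: "(\<exists>\<mu>. eigenvalue A \<mu> \<and> P \<mu>) \<longrightarrow> P e"
  proof (cases "\<exists>\<mu>. eigenvalue A \<mu> \<and> P \<mu>")
    case True thus ?thesis using that by blast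
  next
    case False
    from spectrum_non_empty[OF Ac] obtain e where "eigenvalue A e" unfolding spectrum_def by auto
    thus ?thesis using that False by blast
  qed
  obtain v where vc: "v \<in> carrier_vec (Suc m)" and v1: "v \<bullet>c v = 1" and Av: "A *\<^sub>v v = e \<cdot>\<^sub>v v"
    using unit_eigenvector[OF Ac e] by blast
  obtain W where W: "unitary_mat (Suc m) W" and Wv: "col W 0 = v"
    using unitary_first_col[OF vc v1] by blast
  have Wc: "W \<in> carrier_mat (Suc m) (Suc m)" using W by (simp add: unitary_mat_def)
  have Wa: "mat_adjoint W \<in> carrier_mat (Suc m) (Suc m)" using Wc by simp
  define A1 where "A1 = mat_adjoint W * A * W"
  have A1c: "A1 \<in> carrier_mat (1 + m) (1 + m)" using Wc Ac unfolding A1_def by auto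
  have col0: "A1 $$ (i,0) = (if i = 0 then e else 0)" if i: "i < Suc m" for i
  proof -
    have "A1 = mat_adjoint W * (A * W)" unfolding A1_def
      by (rule assoc_mult_mat[OF Wa Ac Wc])
    hence "A1 $$ (i,0) = row (mat_adjoint W) i \<bullet> col (A * W) 0" using i Wc Ac by simp
    also have "col (A * W) 0 = e \<cdot>\<^sub>v col W 0"
    proof -
      have "col (A * W) 0 = A *\<^sub>v col W 0" by (rule col_mult2[OF Ac Wc], simp)
      thus ?thesis using Av Wv by simp
    qed
    also have "row (mat_adjoint W) i \<bullet> (e \<cdot>\<^sub>v col W 0) = e * (row (mat_adjoint W) i \<bullet> col W 0)"
      using Wc i vc Wv by (intro scalar_prod_smult_distrib[of _ "Suc m"], auto)
    also have "row (mat_adjoint W) i \<bullet> col W 0 = (mat_adjoint W * W) $$ (i,0)" using Wc i by simp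
    also have "\<dots> = (if i = 0 then 1 else 0)" using W i by (simp add: unitary_mat_def)
    finally show ?thesis by simp
  qed
  obtain A11 A12 A21 A22 where sb: "split_block A1 1 1 = (A11, A12, A21, A22)"
    by (cases "split_block A1 1 1", auto)
  from split_block[OF sb, of m m] A1c have A11c: "A11 \<in> carrier_mat 1 1" and A12c: "A12 \<in> carrier_mat 1 m"
    and A21c: "A21 \<in> carrier_mat m 1" and A22c: "A22 \<in> carrier_mat m m"
    and A1b: "A1 = four_block_mat A11 A12 A21 A22" by auto
  have A21: "A21 = 0\<^sub>m m 1"
    using sb A1c col0 unfolding split_block_def Let_def by (auto intro!: eq_matI)
  have A11: "A11 $$ (0,0) = e"
    using sb A1c col0 unfolding split_block_def Let_def by auto
  have ut11: "upper_triangular A11" using A11c by (auto simp: upper_triangular_def)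
  from Suc.IH[OF A22c] obtain U' T' k' where U': "unitary_mat m U'" and T'c: "T' \<in> carrier_mat m m"
    and ut': "upper_triangular T'" and A22: "A22 = U' * T' * mat_adjoint U'" and k': "k' \<le> m"
    and P1: "\<forall>i<k'. P (T'$$(i,i))" and P2: "\<forall>i. k' \<le> i \<and> i < m \<longrightarrow> \<not> P (T'$$(i,i))"
    by blast
  have U'c: "U' \<in> carrier_mat m m" using U' by (simp add: unitary_mat_def)
  have U'a: "mat_adjoint U' \<in> carrier_mat m m" using U'c by simp
  have c: "(1\<^sub>m 1 :: complex mat) \<in> carrier_mat 1 1" "(0\<^sub>m 1 m :: complex mat) \<in> carrier_mat 1 m" 
     "(0\<^sub>m m 1 :: complex mat) \<in> carrier_mat m 1" by auto
  define D where "D = four_block_mat (1\<^sub>m 1) (0\<^sub>m 1 m) (0\<^sub>m m 1) U'"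
  define T where "T = four_block_mat A11 (A12 * U') (0\<^sub>m m 1) T'"
  define U where "U = W * D"
  have Dc: "D \<in> carrier_mat (Suc m) (Suc m)" using U'c unfolding D_def by auto
  have Da: "mat_adjoint D = four_block_mat (1\<^sub>m 1) (0\<^sub>m 1 m) (0\<^sub>m m 1) (mat_adjoint U')"
    using adj_four_block[OF c U'c] unfolding D_def by simp
  have Tc: "T \<in> carrier_mat (Suc m) (Suc m)" using A11c T'c unfolding T_def by auto
  have A12U: "A12 * U' \<in> carrier_mat 1 m" using A12c U'c by auto
  have DT: "D * T = four_block_mat A11 (A12 * U') (0\<^sub>m m 1) (U' * T')"
    unfolding D_def T_def mult_four_block_mat[OF c U'c A11c A12U c(3) T'c]
    using A11c A12c U'c T'c by simp
  have UT'c: "U' * T' \<in> carrier_mat m m" using U'c T'c by auto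
  have "D * T * mat_adjoint D = four_block_mat A11 (A12 * U' * mat_adjoint U') (0\<^sub>m m 1) (U' * T' * mat_adjoint U')"
    unfolding DT Da mult_four_block_mat[OF A11c A12U c(3) UT'c c U'a]
    using A11c A12c U'c T'c 
      mult_carrier_mat[OF A12U U'a] mult_carrier_mat[OF UT'c U'a] by simp
  also have "A12 * U' * mat_adjoint U' = A12 * (U' * mat_adjoint U')"
    by (rule assoc_mult_mat[OF A12c U'c U'a])
  also have "\<dots> = A12"
    using A12c U'c U' by (simp add: unitary_mat_def)
  finally have DTD: "D * T * mat_adjoint D = A1" unfolding A1b A21 A22 .
  have UU: "unitary_mat (Suc m) U" unfolding U_def D_def
    by (rule unitary_mult[OF W unitary_block[OF U']])
  have sq_assoc: "\<And>X Y Z. X \<in> carrier_mat (Suc m) (Suc m) \<Longrightarrow> Y \<in> carrier_mat (Suc m) (Suc m) \<Longrightarrow>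
     Z \<in> carrier_mat (Suc m) (Suc m) \<Longrightarrow> X * Y * Z = X * (Y * Z)" by (rule assoc_mult_mat)
  have sq_mult: "\<And>X Y. X \<in> carrier_mat (Suc m) (Suc m) \<Longrightarrow> Y \<in> carrier_mat (Suc m) (Suc m) \<Longrightarrow>
     X * Y \<in> carrier_mat (Suc m) (Suc m)" by auto
  have Da': "mat_adjoint D \<in> carrier_mat (Suc m) (Suc m)" using Dc by simp
  have "U * T * mat_adjoint U = W * (D * T * mat_adjoint D) * mat_adjoint W"
    unfolding U_def adj_mult[OF Wc Dc] using Wc Dc Tc Wa Da' by (simp add: sq_assoc sq_mult)
  also have "\<dots> = W * mat_adjoint W * A * (W * mat_adjoint W)"
    unfolding DTD A1_def using Wc Ac Wa by (simp add: sq_assoc sq_mult)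
  also have "\<dots> = A" using W Ac by (simp add: unitary_mat_def)
  finally have AU: "A = U * T * mat_adjoint U" by simp
  have ut: "upper_triangular T" unfolding T_def
    by (rule upper_triangular_four_block[OF A11c T'c ut11 ut'])
  have T0: "T $$ (0,0) = e" using A11 A11c T'c unfolding T_def by simp
  have Ti: "T $$ (i,i) = T' $$ (i - 1, i - 1)" if "0 < i" "i < Suc m" for i
    using that A11c T'c unfolding T_def by simp
  show ?case
  proof (cases "P e")
    case True
    have 1: "\<forall>i<Suc k'. P (T $$ (i, i))"
    proof (intro allI impI)
      fix i assume "i < Suc k'" thus "P (T $$ (i, i))"
        using True P1 T0 Ti[of i] k' by (cases i, auto)
    qed
    have 2: "\<forall>i. Suc k' \<le> i \<and> i < Suc m \<longrightarrow> \<not> P (T $$ (i, i))"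
    proof (intro allI impI)
      fix i assume "Suc k' \<le> i \<and> i < Suc m" thus "\<not> P (T $$ (i, i))"
        using P2 Ti[of i] by (cases i, auto)
    qed
    show ?thesis using 1 2 UU Tc ut AU k' by (intro exI[of _ U] exI[of _ T] exI[of _ "Suc k'"], auto)
  next
    case False
    have 2: "\<forall>i. 0 \<le> i \<and> i < Suc m \<longrightarrow> \<not> P (T $$ (i, i))"
    proof (intro allI impI)
      fix i assume "0 \<le> i \<and> i < Suc m"
      then have "eigenvalue A (T $$ (i,i))" using eigen_diag[OF UU Tc ut AU] by auto
      thus "\<not> P (T $$ (i, i))" using pe False by auto
    qed
    show ?thesis using 2 UU Tc ut AU by (intro exI[of _ U] exI[of _ T] exI[of _ 0], auto)
  qed
qed



definition sqn :: "complex \<Rightarrow> real" where "sqn z = (Re z)\<^sup>2 + (Im z)\<^sup>2"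

lemma sqn_nonneg: "sqn z \<ge> 0" by (simp add: sqn_def)
lemma sqn_zero: "sqn z = 0 \<longleftrightarrow> z = 0" by (simp add: sqn_def complex_eq_iff)
lemma mult_cnj_sqn: "z * cnj z = complex_of_real (sqn z)" by (simp add: sqn_def complex_mult_cnj)
lemma cnj_mult_sqn: "cnj z * z = complex_of_real (sqn z)" by (simp add: mult.commute mult_cnj_sqn)

lemma normal_row_col: assumes T: "(T::complex mat) \<in> carrier_mat n n" and N: "T * mat_adjoint T = mat_adjoint T * T"
  and i: "i < n"
  shows "(\<Sum>k<n. sqn (T $$ (i,k))) = (\<Sum>k<n. sqn (T $$ (k,i)))"
proof -
  have "(T * mat_adjoint T) $$ (i,i) = (\<Sum>k<n. complex_of_real (sqn (T $$ (i,k))))"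
    using T i by (simp add: scalar_prod_def mult_cnj_sqn lessThan_atLeast0)
  moreover have "(mat_adjoint T * T) $$ (i,i) = (\<Sum>k<n. complex_of_real (sqn (T $$ (k,i))))"
    using T i by (simp add: scalar_prod_def cnj_mult_sqn lessThan_atLeast0)
  ultimately show ?thesis using N by (simp flip: of_real_sum)
qed

lemma normal_ut_diag: assumes T: "(T::complex mat) \<in> carrier_mat n n" and ut: "upper_triangular T"
  and N: "T * mat_adjoint T = mat_adjoint T * T"
  shows "diagonal_mat T"
proof -
  have low: "T $$ (i,j) = 0" if "j < i" "i < n" for i j using ut T that by (auto simp: upper_triangular_def)
  have main: "\<forall>j. i < j \<and> j < n \<longrightarrow> T $$ (i,j) = 0" if i: "i < n" for i
    using i
  proof (induction i rule: less_induct)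
    case (less i)
    have col: "T $$ (k,i) = 0" if "k < n" "k \<noteq> i" for k
    proof (cases "k < i")
      case True thus ?thesis using less.IH[of k] less.prems that by auto
    next
      case False thus ?thesis using low[of i k] that less.prems by auto
    qed
    have fin: "finite {..<n}" by simp
    have "(\<Sum>k<n. sqn (T $$ (k,i))) = sqn (T $$ (i,i))"
      by (subst sum.remove[OF fin, of i], use less.prems in simp, 
          subst sum.neutral, use col sqn_zero in auto)
    moreover have "(\<Sum>k<n. sqn (T $$ (i,k))) = sqn (T $$ (i,i)) + (\<Sum>k\<in>{..<n} - {i}. sqn (T $$ (i,k)))"
      by (subst sum.remove[OF fin, of i], use less.prems in auto)
    ultimately have "(\<Sum>k\<in>{..<n} - {i}. sqn (T $$ (i,k))) = 0"
      using normal_row_col[OF T N less.prems] by simp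
    hence "\<forall>k\<in>{..<n} - {i}. sqn (T $$ (i,k)) = 0"
      by (subst (asm) sum_nonneg_eq_0_iff, auto simp: sqn_nonneg)
    thus ?case using sqn_zero by auto
  qed
  show ?thesis unfolding diagonal_mat_def
  proof (intro allI impI)
    fix i j assume "i < dim_row T" "j < dim_col T" "i \<noteq> j"
    show "T $$ (i,j) = 0"
    proof (cases "i < j")
      case True thus ?thesis using main[of i] \<open>i < dim_row T\<close> \<open>j < dim_col T\<close> T by auto
    next
      case False thus ?thesis using \<open>i < dim_row T\<close> \<open>i \<noteq> j\<close> T by (intro low, auto)
    qed
  qed
qed



definition bdiag :: "nat \<Rightarrow> complex mat \<Rightarrow> complex mat \<Rightarrow> complex mat" where
  "bdiag n X Y = four_block_mat X (0\<^sub>m n n) (0\<^sub>m n n) Y"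
definition banti :: "nat \<Rightarrow> complex mat \<Rightarrow> complex mat \<Rightarrow> complex mat" where
  "banti n X Y = four_block_mat (0\<^sub>m n n) X Y (0\<^sub>m n n)"

context fixes n :: nat and X Y X' Y' :: "complex mat"
  assumes c: "X \<in> carrier_mat n n" "Y \<in> carrier_mat n n" "X' \<in> carrier_mat n n" "Y' \<in> carrier_mat n n"
begin

lemma z: "(0\<^sub>m n n :: complex mat) \<in> carrier_mat n n" by simp

lemma bdiag_carrier: "bdiag n X Y \<in> carrier_mat (2*n) (2*n)"
  using c unfolding bdiag_def by (metis four_block_carrier_mat mult_2)
lemma banti_carrier: "banti n X Y \<in> carrier_mat (2*n) (2*n)"
  using c unfolding banti_def by (metis four_block_carrier_mat mult_2 zero_carrier_mat)

lemma bdiag_bdiag: "bdiag n X Y * bdiag n X' Y' = bdiag n (X * X') (Y * Y')"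
  unfolding bdiag_def using c by (subst mult_four_block_mat[OF c(1) z z c(2) c(3) z z c(4)], auto)
lemma bdiag_banti: "bdiag n X Y * banti n X' Y' = banti n (X * X') (Y * Y')"
  unfolding bdiag_def banti_def using c by (subst mult_four_block_mat[OF c(1) z z c(2) z c(3) c(4) z], auto)
lemma banti_bdiag: "banti n X Y * bdiag n X' Y' = banti n (X * Y') (Y * X')"
  unfolding bdiag_def banti_def using c by (subst mult_four_block_mat[OF z c(1) c(2) z c(3) z z c(4)], auto)
lemma banti_banti: "banti n X Y * banti n X' Y' = bdiag n (X * Y') (Y * X')"
  unfolding bdiag_def banti_def using c by (subst mult_four_block_mat[OF z c(1) c(2) z z c(3) c(4) z], auto)

lemma bdiag_inj: "bdiag n X Y = bdiag n X' Y' \<Longrightarrow> X = X' \<and> Y = Y'"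
proof -
  assume eq: "bdiag n X Y = bdiag n X' Y'"
  have "X $$ (i,j) = X' $$ (i,j)" if "i < n" "j < n" for i j
    using arg_cong[OF eq, of "\<lambda>M. M $$ (i,j)"] that c unfolding bdiag_def by simp
  moreover have "Y $$ (i,j) = Y' $$ (i,j)" if "i < n" "j < n" for i j
    using arg_cong[OF eq, of "\<lambda>M. M $$ (i+n,j+n)"] that c unfolding bdiag_def by simp
  ultimately show ?thesis using c by (auto intro!: eq_matI)
qed

lemma banti_inj: "banti n X Y = banti n X' Y' \<Longrightarrow> X = X' \<and> Y = Y'"
proof -
  assume eq: "banti n X Y = banti n X' Y'"
  have "X $$ (i,j) = X' $$ (i,j)" if "i < n" "j < n" for i j
    using arg_cong[OF eq, of "\<lambda>M. M $$ (i,j+n)"] that c unfolding banti_def by simp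
  moreover have "Y $$ (i,j) = Y' $$ (i,j)" if "i < n" "j < n" for i j
    using arg_cong[OF eq, of "\<lambda>M. M $$ (i+n,j)"] that c unfolding banti_def by simp
  ultimately show ?thesis using c by (auto intro!: eq_matI)
qed

lemma adj_bdiag: "mat_adjoint (bdiag n X Y) = bdiag n (mat_adjoint X) (mat_adjoint Y)"
  unfolding bdiag_def using c by (subst adj_four_block[OF c(1) z z c(2)], auto)
lemma adj_banti: "mat_adjoint (banti n X Y) = banti n (mat_adjoint Y) (mat_adjoint X)"
  unfolding banti_def using c by (subst adj_four_block[OF z c(1) c(2) z], auto)
lemma uminus_banti: "- banti n X Y = banti n (- X) (- Y)"
  unfolding banti_def using c by (intro eq_matI, auto)

end

lemma bdiag_one: "bdiag n (1\<^sub>m n) (1\<^sub>m n) = 1\<^sub>m (2*n)"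
  unfolding bdiag_def by (simp add: mult_2)

lemma flip_carrier[simp]: "flip_mat m \<in> carrier_mat m m" by (simp add: flip_mat_def)
lemma flip_dims[simp]: "dim_row (flip_mat m) = m" "dim_col (flip_mat m) = m" by (simp_all add: flip_mat_def)

lemma flip_index: "i < m \<Longrightarrow> j < m \<Longrightarrow> flip_mat m $$ (i,j) = (if j = m - 1 - i then 1 else 0)"
  by (auto simp: flip_mat_def)

lemma adj_flip: "mat_adjoint (flip_mat m) = flip_mat m"
  by (rule eq_matI, auto simp: flip_mat_def)

lemma flip_flip: "flip_mat m * flip_mat m = 1\<^sub>m m"
proof (rule eq_matI)
  fix i j assume i: "i < dim_row (1\<^sub>m m)" and j: "j < dim_col (1\<^sub>m m)"
  have "(flip_mat m * flip_mat m) $$ (i,j) = (\<Sum>k\<in>{0..<m}. flip_mat m $$ (i,k) * flip_mat m $$ (k,j))"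
    using i j by (simp add: scalar_prod_def)
  also have "\<dots> = (\<Sum>k\<in>{0..<m}. (if k = m - 1 - i then flip_mat m $$ (k,j) else 0))"
    using i by (intro sum.cong refl, simp add: flip_index[of i m])
  also have "\<dots> = flip_mat m $$ (m - 1 - i, j)" using i by (simp add: sum.delta)
  also have "\<dots> = 1\<^sub>m m $$ (i,j)" using i j by (auto simp: flip_index)
  finally show "(flip_mat m * flip_mat m) $$ (i,j) = 1\<^sub>m m $$ (i,j)" .
qed auto

lemma flip_double: "flip_mat (2*n) = banti n (flip_mat n) (flip_mat n)"
  unfolding banti_def by (rule eq_matI, auto simp: flip_mat_def)

lemma unitary_bdiag: assumes "unitary_mat n X" "unitary_mat n Y"
  shows "unitary_mat (2*n) (bdiag n X Y)"
proof -
  have c: "X \<in> carrier_mat n n" "Y \<in> carrier_mat n n" using assms by (auto simp: unitary_mat_def)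
  hence a: "mat_adjoint X \<in> carrier_mat n n" "mat_adjoint Y \<in> carrier_mat n n" by auto
  show ?thesis unfolding unitary_mat_def adj_bdiag[OF c c] 
    using bdiag_bdiag[OF c a] bdiag_bdiag[OF a c] bdiag_carrier[OF c c] assms bdiag_one
    by (auto simp: unitary_mat_def)
qed



lemma diag_right: assumes D: "(D::complex mat) \<in> carrier_mat N N" and dg: "diagonal_mat D"
  and X: "X \<in> carrier_mat m N" and i: "i < m" and j: "j < N"
  shows "(X * D) $$ (i,j) = X $$ (i,j) * D $$ (j,j)"
proof -
  have "(X * D) $$ (i,j) = (\<Sum>l\<in>{0..<N}. X $$ (i,l) * D $$ (l,j))"
    using D X i j by (simp add: scalar_prod_def)
  also have "\<dots> = (\<Sum>l\<in>{0..<N}. if l = j then X $$ (i,l) * D $$ (l,j) else 0)"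
    using dg D j by (intro sum.cong refl, auto simp: diagonal_mat_def)
  also have "\<dots> = X $$ (i,j) * D $$ (j,j)" using j by (simp add: sum.delta)
  finally show ?thesis .
qed

lemma diag_left: assumes D: "(D::complex mat) \<in> carrier_mat N N" and dg: "diagonal_mat D"
  and X: "X \<in> carrier_mat N m" and i: "i < N" and j: "j < m"
  shows "(D * X) $$ (i,j) = D $$ (i,i) * X $$ (i,j)"
proof -
  have "(D * X) $$ (i,j) = (\<Sum>l\<in>{0..<N}. D $$ (i,l) * X $$ (l,j))"
    using D X i j by (simp add: scalar_prod_def)
  also have "\<dots> = (\<Sum>l\<in>{0..<N}. if l = i then D $$ (i,l) * X $$ (l,j) else 0)"
    using dg D i by (intro sum.cong refl, auto simp: diagonal_mat_def)
  also have "\<dots> = D $$ (i,i) * X $$ (i,j)" using i by (simp add: sum.delta)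
  finally show ?thesis .
qed

lemma diag_adj: "(D::complex mat) \<in> carrier_mat N N \<Longrightarrow> diagonal_mat D \<Longrightarrow> diagonal_mat (mat_adjoint D)"
  by (auto simp: diagonal_mat_def)

lemma row_sqn: assumes X: "(X::complex mat) \<in> carrier_mat N N" and i: "i < N"
  shows "(X * mat_adjoint X) $$ (i,i) = complex_of_real (\<Sum>j<N. sqn (X $$ (i,j)))"
  using X i by (simp add: scalar_prod_def mult_cnj_sqn lessThan_atLeast0)

lemma col_sqn: assumes X: "(X::complex mat) \<in> carrier_mat N N" and j: "j < N"
  shows "(mat_adjoint X * X) $$ (j,j) = complex_of_real (\<Sum>i<N. sqn (X $$ (i,j)))"
  using X j by (simp add: scalar_prod_def cnj_mult_sqn lessThan_atLeast0)

lemma count_blocks: fixes M :: "complex mat" and N k :: nat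
  assumes k: "k \<le> N"
  and rows: "\<And>i. i < N \<Longrightarrow> (\<Sum>j<N. sqn (M $$ (i,j))) = 1"
  and cols: "\<And>j. j < N \<Longrightarrow> (\<Sum>i<N. sqn (M $$ (i,j))) = 1"
  and z: "\<And>i j. i < N \<Longrightarrow> j < N \<Longrightarrow> (i < k \<longleftrightarrow> j < k) \<Longrightarrow> M $$ (i,j) = 0"
  shows "k = N - k"
proof -
  have "real k = (\<Sum>i<k. (\<Sum>j<N. sqn (M $$ (i,j))))" using rows k by simp
  also have "\<dots> = (\<Sum>i<k. (\<Sum>j\<in>{k..<N}. sqn (M $$ (i,j))))"
    by (intro sum.cong refl sum.mono_neutral_right, use z k sqn_zero in auto)
  also have "\<dots> = (\<Sum>j\<in>{k..<N}. (\<Sum>i<k. sqn (M $$ (i,j))))" by (rule sum.swap)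
  also have "\<dots> = (\<Sum>j\<in>{k..<N}. (\<Sum>i<N. sqn (M $$ (i,j))))"
    by (intro sum.cong refl sum.mono_neutral_left, use z k sqn_zero in auto)
  also have "\<dots> = real (N - k)" using cols by simp
  finally show ?thesis by linarith
qed



theorem lemma2p6:
  fixes n :: nat and A :: "complex mat"
  assumes "A \<in> carrier_mat (2*n) (2*n)"
    and "normal_mat A"
    and "perskew_hermitian n A"
    and "\<And>ev. eigenvalue A ev \<Longrightarrow> Re ev \<noteq> 0"
  shows "\<exists>U D. unitary_mat (2*n) U \<and> perplectic n U \<and>
           D \<in> carrier_mat n n \<and> diagonal_mat D \<and>
           A = U * four_block_mat D (0\<^sub>m n n) (0\<^sub>m n n)
                   (- (flip_mat n * mat_adjoint D * flip_mat n)) * mat_adjoint U"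
proof -
  define N where "N = 2 * n"
  have Ac: "A \<in> carrier_mat N N" using assms(1) N_def by simp
  have Aa: "mat_adjoint A \<in> carrier_mat N N" using Ac by simp
  obtain Q T k where Q: "unitary_mat N Q" and Tc: "T \<in> carrier_mat N N" and ut: "upper_triangular T"
    and AQ: "A = Q * T * mat_adjoint Q" and kN: "k \<le> N" and Ppos: "\<forall>i<k. Re (T$$(i,i)) > 0"
    and Pneg: "\<forall>i. k \<le> i \<and> i < N \<longrightarrow> \<not> Re (T$$(i,i)) > 0"
    using schur_ordered[OF Ac, of "\<lambda>z. Re z > 0"] by blast
  have Qc: "Q \<in> carrier_mat N N" and Qa: "mat_adjoint Q \<in> carrier_mat N N"
    using Q by (auto simp: unitary_mat_def)
  have QQ: "Q * mat_adjoint Q = 1\<^sub>m N" "mat_adjoint Q * Q = 1\<^sub>m N" using Q by (auto simp: unitary_mat_def)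
  have sq_assoc: "\<And>X Y Z::complex mat. X \<in> carrier_mat N N \<Longrightarrow> Y \<in> carrier_mat N N \<Longrightarrow>
     Z \<in> carrier_mat N N \<Longrightarrow> X * Y * Z = X * (Y * Z)" by (rule assoc_mult_mat)
  have sq_mult: "\<And>X Y::complex mat. X \<in> carrier_mat N N \<Longrightarrow> Y \<in> carrier_mat N N \<Longrightarrow>
     X * Y \<in> carrier_mat N N" by auto
  have one_l: "\<And>X::complex mat. X \<in> carrier_mat N N \<Longrightarrow> 1\<^sub>m N * X = X" by (rule left_mult_one_mat)
  have one_r: "\<And>X::complex mat. X \<in> carrier_mat N N \<Longrightarrow> X * 1\<^sub>m N = X" by (rule right_mult_one_mat)
  have canc1: "\<And>X. X \<in> carrier_mat N N \<Longrightarrow> Q * (mat_adjoint Q * X) = X"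
    using mult_cancel_left[OF Qc Qa _ QQ(1)] by blast
  have canc2: "\<And>X. X \<in> carrier_mat N N \<Longrightarrow> mat_adjoint Q * (Q * X) = X"
    using mult_cancel_left[OF Qa Qc _ QQ(2)] by blast
  have um_r: "\<And>X Y::complex mat. X \<in> carrier_mat N N \<Longrightarrow> Y \<in> carrier_mat N N \<Longrightarrow> X * - Y = - (X * Y)"
    by (rule uminus_mult_right_mat, simp)
  have um_l: "\<And>X Y::complex mat. X \<in> carrier_mat N N \<Longrightarrow> Y \<in> carrier_mat N N \<Longrightarrow> - X * Y = - (X * Y)"
    by (rule uminus_mult_left_mat, simp)
  note simps = um_r um_l sq_assoc sq_mult one_l one_r canc1 canc2 QQ Qc Qa Ac Aa Tc
  have Tdef: "T = mat_adjoint Q * (A * Q)"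
    unfolding AQ using Tc by (simp add: simps)
  have adjT: "mat_adjoint T = mat_adjoint Q * (mat_adjoint A * Q)"
    unfolding Tdef by (simp add: adj_mult[of _ N N _ N] Qa Ac Qc Aa sq_mult sq_assoc)
  have Ta: "mat_adjoint T \<in> carrier_mat N N" using Tc by simp
  have nA: "A * (mat_adjoint A * Q) = mat_adjoint A * (A * Q)"
    using assms(2) unfolding normal_mat_def by (simp add: sq_assoc[symmetric] Ac Aa Qc)
  have normT: "T * mat_adjoint T = mat_adjoint T * T"
  proof -
    have "T * mat_adjoint T = mat_adjoint Q * (A * (mat_adjoint A * Q))"
      by (subst adjT, subst Tdef, simp add: simps)
    moreover have "mat_adjoint T * T = mat_adjoint Q * (mat_adjoint A * (A * Q))"
      by (subst adjT, subst Tdef, simp add: simps)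
    ultimately show ?thesis using nA by simp
  qed
  have dT: "diagonal_mat T" by (rule normal_ut_diag[OF Tc ut normT])
  define t where "t i = T $$ (i,i)" for i
  have ev: "i < N \<Longrightarrow> Re (t i) \<noteq> 0" for i
    using assms(4) eigen_diag[OF Q Tc ut AQ] unfolding t_def by blast
  have tpos: "i < k \<Longrightarrow> Re (t i) > 0" for i using Ppos t_def by auto
  have tneg: "k \<le> i \<Longrightarrow> i < N \<Longrightarrow> Re (t i) < 0" for i using Pneg ev[of i] t_def
    by (metis linorder_neqE_linordered_idom)
  define F where "F = flip_mat N"
  have Fc: "F \<in> carrier_mat N N" and aF: "mat_adjoint F = F" and FF: "F * F = 1\<^sub>m N"
    unfolding F_def by (auto simp: adj_flip flip_flip)
  have canc3: "\<And>X. X \<in> carrier_mat N N \<Longrightarrow> F * (F * X) = X"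
    using mult_cancel_left[OF Fc Fc _ FF] by blast
  have psk: "mat_adjoint A * F = - (F * A)"
    using assms(3) unfolding perskew_hermitian_def F_def[symmetric] N_def[symmetric]
    by (simp add: adj_mult[OF Fc Ac] aF)
  define M where "M = mat_adjoint Q * (F * Q)"
  have Mc: "M \<in> carrier_mat N N" unfolding M_def using Qa Fc Qc by auto
  have MT: "M * T = - (mat_adjoint T * M)"
  proof -
    have "mat_adjoint A * (F * Q) = - (F * (A * Q))"
    proof -
      have "mat_adjoint A * (F * Q) = (mat_adjoint A * F) * Q" by (rule sq_assoc[symmetric, OF Aa Fc Qc])
      also have "\<dots> = - (F * A) * Q" using psk by simp
      also have "\<dots> = - ((F * A) * Q)" using Fc Ac Qc by (intro uminus_mult_left_mat, simp)
      also have "(F * A) * Q = F * (A * Q)" by (rule sq_assoc[OF Fc Ac Qc])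
      finally show ?thesis .
    qed
    hence "mat_adjoint T * M = - (mat_adjoint Q * (F * (A * Q)))"
      unfolding adjT M_def using Fc Qa Qc Ac by (simp add: simps)
    moreover have "M * T = mat_adjoint Q * (F * (A * Q))"
      unfolding M_def Tdef using Fc by (simp add: simps)
    ultimately show ?thesis by simp
  qed
  have MM: "M * M = 1\<^sub>m N" unfolding M_def using Fc by (simp add: simps canc3)
  have aM: "mat_adjoint M = M" unfolding M_def
    by (simp add: adj_mult[OF Qa sq_mult[OF Fc Qc]] adj_mult[OF Fc Qc] aF sq_assoc Qa Fc Qc)
  have Mrel: "M $$ (i,j) * (t j + cnj (t i)) = 0" if i: "i < N" and j: "j < N" for i j
  proof -
    have "(M * T) $$ (i,j) = M $$ (i,j) * t j" unfolding t_def by (rule diag_right[OF Tc dT Mc i j])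
    moreover have "(mat_adjoint T * M) $$ (i,j) = cnj (t i) * M $$ (i,j)"
      using diag_left[OF Ta diag_adj[OF Tc dT] Mc i j] i Tc unfolding t_def by simp
    moreover have "(- (mat_adjoint T * M)) $$ (i,j) = - ((mat_adjoint T * M) $$ (i,j))"
      using i j Mc Tc by simp
    ultimately have e: "t j * M $$ (i,j) = - (cnj (t i) * M $$ (i,j))"
      using arg_cong[OF MT, of "\<lambda>X. X $$ (i,j)"] by simp
    have "M $$ (i,j) * (t j + cnj (t i)) = t j * M $$ (i,j) + cnj (t i) * M $$ (i,j)"
      by (simp add: algebra_simps)
    thus ?thesis using e by simp
  qed
  have Mz: "M $$ (i,j) = 0" if i: "i < N" and j: "j < N" and ij: "i < k \<longleftrightarrow> j < k" for i j
  proof -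
    have "Re (t j + cnj (t i)) \<noteq> 0"
      using tpos[of i] tpos[of j] tneg[of i] tneg[of j] i j ij by (cases "i < k", auto)
    hence "t j + cnj (t i) \<noteq> 0" by (metis zero_complex.sel(1))
    thus ?thesis using Mrel[OF i j] by simp
  qed
  have rows: "(\<Sum>j<N. sqn (M $$ (i,j))) = 1" if "i < N" for i
  proof -
    have "(M * mat_adjoint M) $$ (i,i) = 1" using MM aM that by simp
    hence "complex_of_real (\<Sum>j<N. sqn (M $$ (i,j))) = 1" using row_sqn[OF Mc that] by metis
    thus ?thesis by (simp only: of_real_eq_1_iff)
  qed
  have cols: "(\<Sum>i<N. sqn (M $$ (i,j))) = 1" if "j < N" for j
  proof -
    have "(mat_adjoint M * M) $$ (j,j) = 1" using MM aM that by simp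
    hence "complex_of_real (\<Sum>i<N. sqn (M $$ (i,j))) = 1" using col_sqn[OF Mc that] by metis
    thus ?thesis by (simp only: of_real_eq_1_iff)
  qed
  have "k = N - k" by (rule count_blocks[OF kN rows cols Mz])
  hence kn: "k = n" unfolding N_def by simp
  define B where "B = mat n n (\<lambda>(i,j). M $$ (i, j + n))"
  define D1 where "D1 = mat n n (\<lambda>(i,j). T $$ (i, j))"
  define D2 where "D2 = mat n n (\<lambda>(i,j). T $$ (i + n, j + n))"
  define Fn where "Fn = flip_mat n"
  have Bc: "B \<in> carrier_mat n n" and Ba: "mat_adjoint B \<in> carrier_mat n n"
    and D1c: "D1 \<in> carrier_mat n n" and D1a: "mat_adjoint D1 \<in> carrier_mat n n"
    and D2c: "D2 \<in> carrier_mat n n" and D2a: "mat_adjoint D2 \<in> carrier_mat n n"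
    and Fnc: "Fn \<in> carrier_mat n n"
    unfolding B_def D1_def D2_def Fn_def by auto
  have Mb: "M = banti n B (mat_adjoint B)"
  proof (rule eq_matI)
    fix i j assume i: "i < dim_row (banti n B (mat_adjoint B))" and j: "j < dim_col (banti n B (mat_adjoint B))"
    hence i': "i < N" and j': "j < N" unfolding banti_def N_def by auto
    have herm: "M $$ (i,j) = cnj (M $$ (j,i))"
      using arg_cong[OF aM, of "\<lambda>X. X $$ (i,j)"] i' j' Mc by simp
    show "M $$ (i,j) = banti n B (mat_adjoint B) $$ (i,j)"
      using i' j' Mz[OF i' j'] herm unfolding banti_def B_def N_def kn
      by (auto simp: not_less)
  qed (use Mc N_def in \<open>auto simp: banti_def\<close>)
  have Tb: "T = bdiag n D1 D2"
  proof (rule eq_matI)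
    fix i j assume i: "i < dim_row (bdiag n D1 D2)" and j: "j < dim_col (bdiag n D1 D2)"
    hence i': "i < N" and j': "j < N" unfolding bdiag_def N_def D1_def D2_def by auto
    have "i \<noteq> j \<Longrightarrow> T $$ (i,j) = 0" using dT i' j' Tc unfolding diagonal_mat_def by auto
    thus "T $$ (i,j) = bdiag n D1 D2 $$ (i,j)"
      using i' j' unfolding bdiag_def D1_def D2_def N_def
      by (auto simp: not_less)
  qed (use Tc N_def in \<open>auto simp: bdiag_def D1_def D2_def\<close>)
  have BB: "B * mat_adjoint B = 1\<^sub>m n" "mat_adjoint B * B = 1\<^sub>m n"
  proof -
    have "bdiag n (B * mat_adjoint B) (mat_adjoint B * B) = bdiag n (1\<^sub>m n) (1\<^sub>m n)"
      using MM unfolding Mb banti_banti[OF Bc Ba Bc Ba] N_def bdiag_one .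
    from bdiag_inj[OF _ _ _ _ this] Bc Ba
    show "B * mat_adjoint B = 1\<^sub>m n" "mat_adjoint B * B = 1\<^sub>m n" by auto
  qed
  have BD2: "B * D2 = - (mat_adjoint D1 * B)"
  proof -
    have "banti n (B * D2) (mat_adjoint B * D1) = banti n (- (mat_adjoint D1 * B)) (- (mat_adjoint D2 * mat_adjoint B))"
      using MT unfolding Mb Tb adj_bdiag[OF D1c D2c D1c D2c] banti_bdiag[OF Bc Ba D1c D2c]
        bdiag_banti[OF D1a D2a Bc Ba] uminus_banti[OF mult_carrier_mat[OF D1a Bc] mult_carrier_mat[OF D2a Ba] Bc Bc] .
    from banti_inj[OF _ _ _ _ this] Bc Ba D1c D2c D1a D2a show ?thesis by auto
  qed
  have nassoc: "\<And>X Y Z::complex mat. X \<in> carrier_mat n n \<Longrightarrow> Y \<in> carrier_mat n n \<Longrightarrow>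
     Z \<in> carrier_mat n n \<Longrightarrow> X * Y * Z = X * (Y * Z)" by (rule assoc_mult_mat)
  have nmult: "\<And>X Y::complex mat. X \<in> carrier_mat n n \<Longrightarrow> Y \<in> carrier_mat n n \<Longrightarrow>
     X * Y \<in> carrier_mat n n" by auto
  have none_l: "\<And>X::complex mat. X \<in> carrier_mat n n \<Longrightarrow> 1\<^sub>m n * X = X" by (rule left_mult_one_mat)
  have none_r: "\<And>X::complex mat. X \<in> carrier_mat n n \<Longrightarrow> X * 1\<^sub>m n = X" by (rule right_mult_one_mat)
  have num_r: "\<And>X Y::complex mat. X \<in> carrier_mat n n \<Longrightarrow> Y \<in> carrier_mat n n \<Longrightarrow> X * - Y = - (X * Y)"
    by (rule uminus_mult_right_mat, simp)
  have num_l: "\<And>X Y::complex mat. X \<in> carrier_mat n n \<Longrightarrow> Y \<in> carrier_mat n n \<Longrightarrow> - X * Y = - (X * Y)"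
    by (rule uminus_mult_left_mat, simp)
  have FnFn: "Fn * Fn = 1\<^sub>m n" unfolding Fn_def by (rule flip_flip)
  have aFn: "mat_adjoint Fn = Fn" unfolding Fn_def by (rule adj_flip)
  have ncanc1: "\<And>X. X \<in> carrier_mat n n \<Longrightarrow> Fn * (Fn * X) = X"
    using mult_cancel_left[OF Fnc Fnc _ FnFn] by blast
  have ncanc2: "\<And>X. X \<in> carrier_mat n n \<Longrightarrow> B * (mat_adjoint B * X) = X"
    using mult_cancel_left[OF Bc Ba _ BB(1)] by blast
  have ncanc3: "\<And>X. X \<in> carrier_mat n n \<Longrightarrow> mat_adjoint B * (B * X) = X"
    using mult_cancel_left[OF Ba Bc _ BB(2)] by blast
  have one: "(1\<^sub>m n :: complex mat) \<in> carrier_mat n n" by simp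
  note nsimps = num_r num_l nassoc nmult none_l none_r FnFn ncanc1 ncanc2 ncanc3 BB Bc Ba D1c D1a D2c Fnc
  define W where "W = mat_adjoint B * Fn"
  have Wc: "W \<in> carrier_mat n n" unfolding W_def using Ba Fnc by auto
  have aW: "mat_adjoint W = Fn * B" unfolding W_def adj_mult[OF Ba Fnc] aFn by simp
  have uFn: "unitary_mat n Fn" unfolding unitary_mat_def aFn using FnFn Fnc by simp
  have uBa: "unitary_mat n (mat_adjoint B)" unfolding unitary_mat_def using BB Ba by simp
  have uW: "unitary_mat n W" unfolding W_def by (rule unitary_mult[OF uBa uFn])
  have u1: "unitary_mat n (1\<^sub>m n)" by (simp add: unitary_mat_def)
  define V where "V = bdiag n (1\<^sub>m n) W"
  have uV: "unitary_mat N V" unfolding V_def N_def by (rule unitary_bdiag[OF u1 uW])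
  have Vc: "V \<in> carrier_mat N N" and Va: "mat_adjoint V \<in> carrier_mat N N"
    using uV by (auto simp: unitary_mat_def)
  have aV: "mat_adjoint V = bdiag n (1\<^sub>m n) (Fn * B)"
    unfolding V_def adj_bdiag[OF one Wc one Wc] aW by simp
  define U where "U = Q * V"
  have uU: "unitary_mat N U" unfolding U_def by (rule unitary_mult[OF Q uV])
  have Uc: "U \<in> carrier_mat N N" using uU by (auto simp: unitary_mat_def)
  have FnB: "Fn * B \<in> carrier_mat n n" using Fnc Bc by auto
  have BW: "B * W \<in> carrier_mat n n" using Bc Wc by auto
  have Ba1: "mat_adjoint B * 1\<^sub>m n \<in> carrier_mat n n" using Ba by auto
  have perp: "mat_adjoint U * F * U = F"
  proof -
    have "mat_adjoint U * F * U = mat_adjoint V * (M * V)"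
      unfolding U_def M_def adj_mult[OF Qc Vc] using Vc Va Fc by (simp add: simps)
    also have "M * V = banti n (B * W) (mat_adjoint B * 1\<^sub>m n)"
      unfolding Mb V_def by (rule banti_bdiag[OF Bc Ba one Wc])
    also have "mat_adjoint V * \<dots> = banti n (1\<^sub>m n * (B * W)) (Fn * B * (mat_adjoint B * 1\<^sub>m n))"
      unfolding aV by (rule bdiag_banti[OF one FnB BW Ba1])
    also have "\<dots> = banti n Fn Fn" unfolding W_def by (simp add: nsimps)
    also have "\<dots> = F" unfolding F_def N_def Fn_def by (rule flip_double[symmetric])
    finally show ?thesis .
  qed
  define E where "E = - (Fn * mat_adjoint D1 * Fn)"
  have Ec: "E \<in> carrier_mat n n" unfolding E_def using Fnc D1a by auto
  have Blkc: "bdiag n D1 E \<in> carrier_mat N N" unfolding N_def by (rule bdiag_carrier[OF D1c Ec D1c Ec])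
  have D2e: "D2 = - (mat_adjoint B * (mat_adjoint D1 * B))"
  proof -
    have "D2 = mat_adjoint B * (B * D2)" using D2c by (simp add: ncanc3)
    also have "\<dots> = - (mat_adjoint B * (mat_adjoint D1 * B))" unfolding BD2 by (simp add: nsimps)
    finally show ?thesis .
  qed
  have VBV: "V * bdiag n D1 E * mat_adjoint V = T"
  proof -
    have WE: "W * E \<in> carrier_mat n n" using Wc Ec by auto
    have D11: "1\<^sub>m n * D1 \<in> carrier_mat n n" using D1c by auto
    have "V * bdiag n D1 E * mat_adjoint V = V * bdiag n D1 E * bdiag n (1\<^sub>m n) (Fn * B)"
      by (simp only: aV)
    also have "\<dots> = bdiag n (1\<^sub>m n * D1 * 1\<^sub>m n) (W * E * (Fn * B))"
      unfolding V_def bdiag_bdiag[OF one Wc D1c Ec] bdiag_bdiag[OF D11 WE one FnB] ..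
    also have "\<dots> = bdiag n D1 D2" unfolding D2e W_def E_def by (simp add: nsimps)
    finally show ?thesis using Tb by simp
  qed
  have AU: "A = U * bdiag n D1 E * mat_adjoint U"
  proof -
    have "U * bdiag n D1 E * mat_adjoint U = Q * (V * bdiag n D1 E * mat_adjoint V) * mat_adjoint Q"
      unfolding U_def adj_mult[OF Qc Vc] using Vc Va Blkc by (simp add: simps)
    thus ?thesis unfolding VBV AQ by simp
  qed
  have dD1: "diagonal_mat D1" using dT Tc unfolding diagonal_mat_def D1_def N_def by auto
  have g1: "unitary_mat (2 * n) U" using uU N_def by simp
  have g2: "perplectic n U" unfolding perplectic_def using Uc perp F_def N_def by simp
  have g5: "A = U * four_block_mat D1 (0\<^sub>m n n) (0\<^sub>m n n) (- (flip_mat n * mat_adjoint D1 * flip_mat n)) * mat_adjoint U"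
    using AU unfolding bdiag_def E_def Fn_def .
  show ?thesis using g1 g2 g5 D1c dD1 by blast
qed

end
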